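(* Consider the asymmetric information disclosure game with preference disclosure policy $\psi$, information disclosure policy $\gamma$, and estimation policy $\eta$. Suppose that: (A) the receiver uses an MPPD policy $\psi^\star$ parameterized by thresholds $(\theta^\star_{1,2},\ldots,\theta^\star_{n-1,n})$, with $\theta^\star_{0,1}=0$ and $\theta^\star_{n,n+1}=1$; (B) the platform uses a monotone WQD policy $\gamma^\star$ parameterized by weights $(w^\star_1,\ldots,w^\star_n)$ with $w^\star_1<\cdots<w^\star_n$; (C) the receiver uses the estimation policy $\eta^\star(y,m)=(x_1,\mu_1)$ if $y=(1,x_1)$ and $\eta^\star(y,m)=(\mu_2,x_2)$ if $y=(2,x_2)$. Then $(\psi^\star,\gamma^\star,\eta^\star)$ constitute a Bayesian Nash Equilibrium if the following conditions hold: (C1) for each interior partition threshold, $L(w^\star_m \mid \theta^\star_{m,m+1})=L(w^\star_{m+1}\mid \theta^\star_{m,m+1})$, $1\le m<n$; (C2) for each $m\in[n]$, $w^\star_m=\mathbf{E}\big[\Theta \mid \theta^\star_{m-1,m}<\Theta<\theta^\star_{m,m+1}\big]$.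
   Context: Setting: $X_1,X_2$ are independent real random variables with densities symmetric around their means $\mu_1,\mu_2$ and full support on $\mathbb{R}$; the receiver's private preference $\Theta$ is independent of $(X_1,X_2)$, supported on $[0,1]$ with smooth prior density $\pi$. The receiver observes $\Theta=\theta$ and sends a message $m=\psi(\theta)\in[n]=\{1,\ldots,n\}$. The platform observes $(x_1,x_2,m)$ and chooses $s=\gamma(m,x_1,x_2)\in\{1,2\}$, sending $y=(s,x_s)$. The receiver outputs estimates $(\hat x_1,\hat x_2)=\eta(y,m)$, equal to $x_s$ for the disclosed variable and the conditional expectation $\mathbf{E}[X_i\mid m,y]$ for the other. Both agents share the loss $\ell=\theta(x_1-\hat x_1)^2+(1-\theta)(x_2-\hat x_2)^2$; the receiver minimizes $\mathbf{E}[\ell\mid\Theta=\theta]$ over $m$, the platform minimizes $\mathbf{E}[\ell\mid X_1=x_1,X_2=x_2,M=m]$ over $s$. A Bayesian Nash Equilibrium (BNE) is a triple $(\psi^\star,\gamma^\star,\eta^\star)$ such that $\psi^\star(\theta)$ minimizes the receiver's expected loss for every $\theta$ given $(\gamma^\star,\eta^\star)$, $\gamma^\star(m,x_1,x_2)$ minimizes the platform's expected loss for every $(m,x_1,x_2)$ given $(\psi^\star,\eta^\star)$, and $\eta^\star$ is consistent (Bayes) with the policies. A weighted-quadratic disclosure (WQD) policy with weights $w_m\in[0,1]$ is $\gamma(m,x_1,x_2)=1$ if $w_m(x_1-\mu_1)^2>(1-w_m)(x_2-\mu_2)^2$ and $=2$ otherwise. A monotone partition preference disclosure (MPPD) policy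 has thresholds $0=\theta^\star_{0,1}<\theta^\star_{1,2}<\cdots<\theta^\star_{n,n+1}=1$ with $\psi(\theta)=m$ for $\theta\in(\theta^\star_{m-1,m},\theta^\star_{m,m+1})$. The receiver's expected loss under a WQD weight $w$ and estimator $\eta^\star$ is $L(w\mid\theta):=\theta\,\mathbf{E}\big[(X_1-\mu_1)^2\mathbf{1}\big((1-w)(X_2-\mu_2)^2\ge w(X_1-\mu_1)^2\big)\big]+(1-\theta)\,\mathbf{E}\big[(X_2-\mu_2)^2\mathbf{1}\big((1-w)(X_2-\mu_2)^2<w(X_1-\mu_1)^2\big)\big]$. *)

theory Defs
  imports "HOL-Analysis.Analysis"
begin

definition smooth_on :: "real set \<Rightarrow> (real \<Rightarrow> real) \<Rightarrow> bool" where
  "smooth_on S g \<longleftrightarrow> (\<exists>D :: nat \<Rightarrow> real \<Rightarrow> real. (\<forall>x\<in>S. D 0 x = g x) \<and>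
     (\<forall>k. \<forall>x\<in>S. (D k has_real_derivative D (Suc k) x) (at x within S)))"

definition sym_full_density :: "(real \<Rightarrow> real) \<Rightarrow> real \<Rightarrow> bool" where
  "sym_full_density f mu \<longleftrightarrow>
     f \<in> borel_measurable lborel \<and> (\<forall>x. 0 \<le> f x) \<and>
     integrable lborel f \<and> (LINT x|lborel. f x) = 1 \<and>
     (\<forall>t. f (mu + t) = f (mu - t)) \<and>
     (\<forall>a b. a < b \<longrightarrow> (LINT x:{a<..<b}|lborel. f x) > 0)"

definition prior_density :: "(real \<Rightarrow> real) \<Rightarrow> bool" where
  "prior_density p \<longleftrightarrow>
     p \<in> borel_measurable lborel \<and> (\<forall>x\<in>{0..1}. 0 \<le> p x) \<and>
     set_integrable lborel {0..1} p \<and> (LINT x:{0..1}|lborel. p x) = 1 \<and>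
     smooth_on {0..1} p"

definition loss :: "real \<Rightarrow> real \<Rightarrow> real \<Rightarrow> real \<times> real \<Rightarrow> real" where
  "loss \<theta> x1 x2 e = \<theta> * (x1 - fst e)\<^sup>2 + (1 - \<theta>) * (x2 - snd e)\<^sup>2"

definition disclose :: "nat \<Rightarrow> real \<Rightarrow> real \<Rightarrow> nat \<times> real" where
  "disclose s x1 x2 = (s, if s = 1 then x1 else x2)"

definition recv_loss ::
  "(real \<Rightarrow> real) \<Rightarrow> (real \<Rightarrow> real) \<Rightarrow> (nat \<Rightarrow> real \<Rightarrow> real \<Rightarrow> nat)
   \<Rightarrow> (nat \<times> real \<Rightarrow> nat \<Rightarrow> real \<times> real) \<Rightarrow> real \<Rightarrow> nat \<Rightarrow> real" where
  "recv_loss f1 f2 \<gamma> \<eta> \<theta> m =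
     (LINT x1|lborel. LINT x2|lborel.
        f1 x1 * f2 x2 * loss \<theta> x1 x2 (\<eta> (disclose (\<gamma> m x1 x2) x1 x2) m))"

definition plat_loss ::
  "(real \<Rightarrow> real) \<Rightarrow> (real \<Rightarrow> nat) \<Rightarrow> (nat \<times> real \<Rightarrow> nat \<Rightarrow> real \<times> real)
   \<Rightarrow> nat \<Rightarrow> real \<Rightarrow> real \<Rightarrow> nat \<Rightarrow> real" where
  "plat_loss p \<psi> \<eta> m x1 x2 s =
     (LINT \<theta>:{\<theta>\<in>{0..1}. \<psi> \<theta> = m}|lborel. p \<theta> * loss \<theta> x1 x2 (\<eta> (disclose s x1 x2) m))
     / (LINT \<theta>:{\<theta>\<in>{0..1}. \<psi> \<theta> = m}|lborel. p \<theta>)"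

text \<open>Bayes consistency of the estimator: disclosed coordinate is reported exactly,
  the undisclosed one is the conditional mean E[X_i | M = m, Y = y] (whenever the
  conditioning event has positive conditional probability; X independent of Theta).\<close>
definition bayes_consistent ::
  "nat \<Rightarrow> (real \<Rightarrow> real) \<Rightarrow> (real \<Rightarrow> real) \<Rightarrow> (nat \<Rightarrow> real \<Rightarrow> real \<Rightarrow> nat)
   \<Rightarrow> (nat \<times> real \<Rightarrow> nat \<Rightarrow> real \<times> real) \<Rightarrow> bool" where
  "bayes_consistent n f1 f2 \<gamma> \<eta> \<longleftrightarrow>
     (\<forall>m\<in>{1..n}. \<forall>x1 x2.
        fst (\<eta> (1, x1) m) = x1 \<and> snd (\<eta> (2, x2) m) = x2 \<and>
        ((LINT t:{t. \<gamma> m x1 t = 1}|lborel. f2 t) > 0 \<longrightarrow>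
           snd (\<eta> (1, x1) m) = (LINT t:{t. \<gamma> m x1 t = 1}|lborel. t * f2 t)
                                / (LINT t:{t. \<gamma> m x1 t = 1}|lborel. f2 t)) \<and>
        ((LINT t:{t. \<gamma> m t x2 = 2}|lborel. f1 t) > 0 \<longrightarrow>
           fst (\<eta> (2, x2) m) = (LINT t:{t. \<gamma> m t x2 = 2}|lborel. t * f1 t)
                                / (LINT t:{t. \<gamma> m t x2 = 2}|lborel. f1 t)))"

definition bne ::
  "nat \<Rightarrow> (real \<Rightarrow> real) \<Rightarrow> (real \<Rightarrow> real) \<Rightarrow> (real \<Rightarrow> real)
   \<Rightarrow> (real \<Rightarrow> nat) \<Rightarrow> (nat \<Rightarrow> real \<Rightarrow> real \<Rightarrow> nat)
   \<Rightarrow> (nat \<times> real \<Rightarrow> nat \<Rightarrow> real \<times> real) \<Rightarrow> bool" where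
  "bne n f1 f2 p \<psi> \<gamma> \<eta> \<longleftrightarrow>
     (\<forall>\<theta>\<in>{0..1}. \<psi> \<theta> \<in> {1..n} \<and>
        (\<forall>m\<in>{1..n}. recv_loss f1 f2 \<gamma> \<eta> \<theta> (\<psi> \<theta>) \<le> recv_loss f1 f2 \<gamma> \<eta> \<theta> m)) \<and>
     (\<forall>m\<in>{1..n}. \<forall>x1 x2. \<gamma> m x1 x2 \<in> {1, 2} \<and>
        (\<forall>s\<in>{1::nat, 2}. plat_loss p \<psi> \<eta> m x1 x2 (\<gamma> m x1 x2) \<le> plat_loss p \<psi> \<eta> m x1 x2 s)) \<and>
     bayes_consistent n f1 f2 \<gamma> \<eta>"

text \<open>Monotone partition preference disclosure: thresholds thr 0 = 0 < thr 1 < ... < thr n = 1,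
  where thr m is theta*_{m,m+1}; psi theta = m on the open cell (thr (m-1), thr m).
  At the (measure zero) cell boundaries psi picks one of the adjacent cells.\<close>
definition mppd :: "nat \<Rightarrow> (nat \<Rightarrow> real) \<Rightarrow> (real \<Rightarrow> nat) \<Rightarrow> bool" where
  "mppd n thr \<psi> \<longleftrightarrow>
     thr 0 = 0 \<and> thr n = 1 \<and> (\<forall>i<n. thr i < thr (Suc i)) \<and>
     (\<forall>m\<in>{1..n}. \<forall>\<theta>. thr (m - 1) < \<theta> \<and> \<theta> < thr m \<longrightarrow> \<psi> \<theta> = m) \<and>
     (\<forall>\<theta>\<in>{0..1}. \<psi> \<theta> \<in> {1..n} \<and> thr (\<psi> \<theta> - 1) \<le> \<theta> \<and> \<theta> \<le> thr (\<psi> \<theta>))"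

definition wqd :: "real \<Rightarrow> real \<Rightarrow> (nat \<Rightarrow> real) \<Rightarrow> nat \<Rightarrow> real \<Rightarrow> real \<Rightarrow> nat" where
  "wqd mu1 mu2 w m x1 x2 =
     (if w m * (x1 - mu1)\<^sup>2 > (1 - w m) * (x2 - mu2)\<^sup>2 then 1 else 2)"

definition eta_star :: "real \<Rightarrow> real \<Rightarrow> nat \<times> real \<Rightarrow> nat \<Rightarrow> real \<times> real" where
  "eta_star mu1 mu2 y m = (if fst y = 1 then (snd y, mu2) else (mu1, snd y))"

definition Lw :: "(real \<Rightarrow> real) \<Rightarrow> (real \<Rightarrow> real) \<Rightarrow> real \<Rightarrow> real \<Rightarrow> real \<Rightarrow> real \<Rightarrow> real" where
  "Lw f1 f2 mu1 mu2 w \<theta> =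
     \<theta> * (LINT x1|lborel. LINT x2|lborel. f1 x1 * f2 x2 * ((x1 - mu1)\<^sup>2 *
           (if (1 - w) * (x2 - mu2)\<^sup>2 \<ge> w * (x1 - mu1)\<^sup>2 then 1 else 0)))
   + (1 - \<theta>) * (LINT x1|lborel. LINT x2|lborel. f1 x1 * f2 x2 * ((x2 - mu2)\<^sup>2 *
           (if (1 - w) * (x2 - mu2)\<^sup>2 < w * (x1 - mu1)\<^sup>2 then 1 else 0)))"

end

theory Submission
  imports Defs
begin

lemma prod_integrable:
  fixes u v :: "real \<Rightarrow> real"
  assumes u: "integrable lborel u" and v: "integrable lborel v"
  shows "integrable (lborel \<Otimes>\<^sub>M lborel) (\<lambda>z. u (fst z) * v (snd z))"
proof (rule lborel_pair.Fubini_integrable)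
  have [measurable]: "u \<in> borel_measurable lborel" "v \<in> borel_measurable lborel" using u v by auto
  show "(\<lambda>z. u (fst z) * v (snd z)) \<in> borel_measurable (lborel \<Otimes>\<^sub>M lborel)" by measurable
  have "(\<lambda>x. \<integral>y. norm (u (fst (x, y)) * v (snd (x, y))) \<partial>lborel) = (\<lambda>x. \<bar>u x\<bar> * (\<integral>y. \<bar>v y\<bar> \<partial>lborel))"
    by (simp add: abs_mult)
  moreover have "integrable lborel (\<lambda>x. \<bar>u x\<bar> * (\<integral>y. \<bar>v y\<bar> \<partial>lborel))"
    using u by (intro integrable_mult_left integrable_abs)
  ultimately show "integrable lborel (\<lambda>x. \<integral>y. norm (u (fst (x, y)) * v (snd (x, y))) \<partial>lborel)" by simp
  show "AE x in lborel. integrable lborel (\<lambda>y. u (fst (x, y)) * v (snd (x, y)))"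
    using v by simp
qed


definition GA :: "(real \<Rightarrow> real) \<Rightarrow> (real \<Rightarrow> real) \<Rightarrow> real \<Rightarrow> real \<Rightarrow> real \<Rightarrow> real \<times> real \<Rightarrow> real" where
  "GA f1 f2 mu1 mu2 w z = f1 (fst z) * f2 (snd z) * ((fst z - mu1)\<^sup>2 *
           (if (1 - w) * (snd z - mu2)\<^sup>2 \<ge> w * (fst z - mu1)\<^sup>2 then 1 else 0))"
definition GB :: "(real \<Rightarrow> real) \<Rightarrow> (real \<Rightarrow> real) \<Rightarrow> real \<Rightarrow> real \<Rightarrow> real \<Rightarrow> real \<times> real \<Rightarrow> real" where
  "GB f1 f2 mu1 mu2 w z = f1 (fst z) * f2 (snd z) * ((snd z - mu2)\<^sup>2 *
           (if (1 - w) * (snd z - mu2)\<^sup>2 < w * (fst z - mu1)\<^sup>2 then 1 else 0))"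

locale recv_setup =
  fixes f1 f2 :: "real \<Rightarrow> real" and mu1 mu2 :: real
  assumes m1[measurable]: "f1 \<in> borel_measurable lborel" and m2[measurable]: "f2 \<in> borel_measurable lborel"
    and nn1: "\<And>x. 0 \<le> f1 x" and nn2: "\<And>x. 0 \<le> f2 x"
    and i1: "integrable lborel f1" and i2: "integrable lborel f2"
    and v1: "integrable lborel (\<lambda>x. (x - mu1)\<^sup>2 * f1 x)"
    and v2: "integrable lborel (\<lambda>x. (x - mu2)\<^sup>2 * f2 x)"
begin

abbreviation "P \<equiv> (lborel \<Otimes>\<^sub>M (lborel :: real measure))"
definition "A w = integral\<^sup>L P (GA f1 f2 mu1 mu2 w)"
definition "B w = integral\<^sup>L P (GB f1 f2 mu1 mu2 w)"

lemma GA_meas[measurable]: "GA f1 f2 mu1 mu2 w \<in> borel_measurable P"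
  unfolding GA_def by measurable
lemma GB_meas[measurable]: "GB f1 f2 mu1 mu2 w \<in> borel_measurable P"
  unfolding GB_def by measurable

lemma GA_int: "integrable P (GA f1 f2 mu1 mu2 w)"
proof (rule Bochner_Integration.integrable_bound[OF prod_integrable[OF v1 i2]])
  show "GA f1 f2 mu1 mu2 w \<in> borel_measurable P" by measurable
  show "AE z in P. norm (GA f1 f2 mu1 mu2 w z) \<le> norm ((fst z - mu1)\<^sup>2 * f1 (fst z) * f2 (snd z))"
    using nn1 nn2 by (auto simp: GA_def abs_mult)
qed

lemma GB_int: "integrable P (GB f1 f2 mu1 mu2 w)"
proof (rule Bochner_Integration.integrable_bound[OF prod_integrable[OF i1 v2]])
  show "GB f1 f2 mu1 mu2 w \<in> borel_measurable P" by measurable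
  show "AE z in P. norm (GB f1 f2 mu1 mu2 w z) \<le> norm (f1 (fst z) * ((snd z - mu2)\<^sup>2 * f2 (snd z)))"
    using nn1 nn2 by (auto simp: GB_def abs_mult)
qed

lemma Lw_eq: "Lw f1 f2 mu1 mu2 w \<theta> = \<theta> * A w + (1 - \<theta>) * B w"
proof -
  have a: "(LINT x1|lborel. LINT x2|lborel. f1 x1 * f2 x2 * ((x1 - mu1)\<^sup>2 *
           (if (1 - w) * (x2 - mu2)\<^sup>2 \<ge> w * (x1 - mu1)\<^sup>2 then 1 else 0))) = A w"
    using lborel_pair.integral_fst'[OF GA_int[of w]] by (simp add: A_def GA_def)
  have b: "(LINT x1|lborel. LINT x2|lborel. f1 x1 * f2 x2 * ((x2 - mu2)\<^sup>2 *
           (if (1 - w) * (x2 - mu2)\<^sup>2 < w * (x1 - mu1)\<^sup>2 then 1 else 0))) = B w"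
    using lborel_pair.integral_fst'[OF GB_int[of w]] by (simp add: B_def GB_def)
  show ?thesis unfolding Lw_def a b ..
qed

lemma recv_eq: "recv_loss f1 f2 (wqd mu1 mu2 w) (eta_star mu1 mu2) \<theta> m = Lw f1 f2 mu1 mu2 (w m) \<theta>"
proof -
  let ?G = "\<lambda>z. \<theta> * GA f1 f2 mu1 mu2 (w m) z + (1 - \<theta>) * GB f1 f2 mu1 mu2 (w m) z"
  have int: "integrable P ?G" using GA_int GB_int by auto
  have pw: "f1 x1 * f2 x2 * loss \<theta> x1 x2 (eta_star mu1 mu2 (disclose (wqd mu1 mu2 w m x1 x2) x1 x2) m)
      = ?G (x1, x2)" for x1 x2
    by (auto simp: GA_def GB_def loss_def eta_star_def disclose_def wqd_def algebra_simps)
  have "recv_loss f1 f2 (wqd mu1 mu2 w) (eta_star mu1 mu2) \<theta> m = (LINT x1|lborel. LINT x2|lborel. ?G (x1, x2))"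
    unfolding recv_loss_def pw ..
  also have "\<dots> = integral\<^sup>L P ?G" using lborel_pair.integral_fst'[OF int] .
  also have "\<dots> = \<theta> * A (w m) + (1 - \<theta>) * B (w m)"
    using GA_int GB_int by (simp add: A_def B_def)
  finally show ?thesis by (simp add: Lw_eq)
qed

lemma A_mono: "w \<le> w' \<Longrightarrow> A w' \<le> A w"
  unfolding A_def
proof (rule integral_mono[OF GA_int GA_int])
  fix z assume "w \<le> w'"
  have "(if (1 - w') * (snd z - mu2)\<^sup>2 \<ge> w' * (fst z - mu1)\<^sup>2 then 1 else 0)
     \<le> (if (1 - w) * (snd z - mu2)\<^sup>2 \<ge> w * (fst z - mu1)\<^sup>2 then 1 else (0::real))"
  proof -
    have "(1 - w) * (snd z - mu2)\<^sup>2 \<ge> w * (fst z - mu1)\<^sup>2" if "(1 - w') * (snd z - mu2)\<^sup>2 \<ge> w' * (fst z - mu1)\<^sup>2"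
    proof -
      have "(w' - w) * ((snd z - mu2)\<^sup>2 + (fst z - mu1)\<^sup>2) \<ge> 0" using \<open>w \<le> w'\<close> by simp
      then show ?thesis using that by (simp add: algebra_simps)
    qed
    then show ?thesis by auto
  qed
  then show "GA f1 f2 mu1 mu2 w' z \<le> GA f1 f2 mu1 mu2 w z"
    unfolding GA_def using nn1 nn2 by (intro mult_left_mono) auto
qed

lemma B_mono: "w \<le> w' \<Longrightarrow> B w \<le> B w'"
  unfolding B_def
proof (rule integral_mono[OF GB_int GB_int])
  fix z assume "w \<le> w'"
  have "(if (1 - w) * (snd z - mu2)\<^sup>2 < w * (fst z - mu1)\<^sup>2 then 1 else 0)
     \<le> (if (1 - w') * (snd z - mu2)\<^sup>2 < w' * (fst z - mu1)\<^sup>2 then 1 else (0::real))"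
  proof -
    have "(1 - w') * (snd z - mu2)\<^sup>2 < w' * (fst z - mu1)\<^sup>2" if "(1 - w) * (snd z - mu2)\<^sup>2 < w * (fst z - mu1)\<^sup>2"
    proof -
      have "(w' - w) * ((snd z - mu2)\<^sup>2 + (fst z - mu1)\<^sup>2) \<ge> 0" using \<open>w \<le> w'\<close> by simp
      then show ?thesis using that by (simp add: algebra_simps)
    qed
    then show ?thesis by auto
  qed
  then show "GB f1 f2 mu1 mu2 w z \<le> GB f1 f2 mu1 mu2 w' z"
    unfolding GB_def using nn1 nn2 by (intro mult_left_mono) auto
qed

end


lemma thr_mono:
  assumes "\<forall>i<n. thr i < thr (Suc i)" "i \<le> k" "k \<le> n"
  shows "(thr i :: real) \<le> thr k"
  using assms(2,3)
proof (induction k)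
  case 0 then show ?case by simp
next
  case (Suc k)
  show ?case
  proof (cases "i = Suc k")
    case False
    then have "thr i \<le> thr k" using Suc by simp
    also have "\<dots> \<le> thr (Suc k)" using assms(1) Suc.prems by (simp add: less_imp_le)
    finally show ?thesis .
  qed simp
qed

lemma lines_min:
  fixes a b thr :: "nat \<Rightarrow> real"
  assumes slope: "\<forall>k\<in>{1..<n}. a (Suc k) - b (Suc k) \<le> a k - b k"
    and eq: "\<forall>k\<in>{1..<n}. thr k * a k + (1 - thr k) * b k = thr k * a (Suc k) + (1 - thr k) * b (Suc k)"
    and tm: "\<forall>i<n. thr i < thr (Suc i)"
    and j: "j \<in> {1..n}" and th: "thr (j - 1) \<le> \<theta>" "\<theta> \<le> thr j" and m: "m \<in> {1..n}"
  shows "\<theta> * a j + (1 - \<theta>) * b j \<le> \<theta> * a m + (1 - \<theta>) * b m"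
proof -
  define L where "L k = \<theta> * a k + (1 - \<theta>) * b k" for k
  have step: "L (Suc k) - L k = (\<theta> - thr k) * ((a (Suc k) - b (Suc k)) - (a k - b k))"
    if "k \<in> {1..<n}" for k
    using eq that unfolding L_def by (auto simp: algebra_simps)
  have up: "j + d \<le> n \<longrightarrow> L j \<le> L (j + d)" for d
  proof (induction d)
    case (Suc d)
    show ?case
    proof
      assume le: "j + Suc d \<le> n"
      let ?k = "j + d"
      have k: "?k \<in> {1..<n}" using j le by auto
      have "\<theta> \<le> thr ?k" using th(2) thr_mono[OF tm, of j ?k] le by auto
      then have "0 \<le> (\<theta> - thr ?k) * ((a (Suc ?k) - b (Suc ?k)) - (a ?k - b ?k))"
        using slope k by (intro mult_nonpos_nonpos) auto
      then have "L ?k \<le> L (Suc ?k)" using step[OF k] by simp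
      then show "L j \<le> L (j + Suc d)" using Suc le by simp
    qed
  qed simp
  have down: "d < j \<longrightarrow> L j \<le> L (j - d)" for d
  proof (induction d)
    case (Suc d)
    show ?case
    proof
      assume le: "Suc d < j"
      let ?k = "j - Suc d"
      have k: "?k \<in> {1..<n}" using j le by auto
      have sk: "Suc ?k = j - d" using le by simp
      have "thr ?k \<le> thr (j - 1)" using thr_mono[OF tm, of ?k "j - 1"] le j by auto
      then have "thr ?k \<le> \<theta>" using th(1) by linarith
      then have "0 \<le> (\<theta> - thr ?k) * ((a ?k - b ?k) - (a (Suc ?k) - b (Suc ?k)))"
        using slope k by (intro mult_nonneg_nonneg) auto
      then have "L (Suc ?k) \<le> L ?k" using step[OF k] by (simp add: algebra_simps)
      then show "L j \<le> L (j - Suc d)" using Suc le sk by simp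
    qed
  qed simp
  show ?thesis
  proof (cases "j \<le> m")
    case True
    then show ?thesis using up[of "m - j"] m unfolding L_def by auto
  next
    case False
    then show ?thesis using down[of "j - m"] m unfolding L_def by auto
  qed
qed


lemma sym_mean:
  fixes f :: "real \<Rightarrow> real" and Q :: "real \<Rightarrow> bool"
  assumes fm[measurable]: "f \<in> borel_measurable lborel" and nn: "\<And>x. 0 \<le> f x"
    and fi: "integrable lborel f" and fv: "integrable lborel (\<lambda>x. x\<^sup>2 * f x)"
    and sym: "\<And>t. f (mu + t) = f (mu - t)"
    and Qm[measurable]: "Measurable.pred borel Q"
    and Qs: "\<And>t. Q (2 * mu - t) = Q t"
  shows "(LINT t:{t. Q t}|lborel. t * f t) = mu * (LINT t:{t. Q t}|lborel. f t)"
proof -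
  have tf: "integrable lborel (\<lambda>x. x * f x)"
  proof (rule Bochner_Integration.integrable_bound[OF Bochner_Integration.integrable_add[OF fi fv]])
    show "(\<lambda>x. x * f x) \<in> borel_measurable lborel" by measurable
    show "AE x in lborel. norm (x * f x) \<le> norm (f x + x\<^sup>2 * f x)"
    proof (intro AE_I2)
      fix x :: real
      have "\<bar>x\<bar> \<le> 1 + x\<^sup>2"
      proof -
        have e: "x\<^sup>2 = \<bar>x\<bar>\<^sup>2" by simp
        have "0 \<le> (\<bar>x\<bar> - 1)\<^sup>2" by simp
        then have "0 \<le> \<bar>x\<bar>\<^sup>2 - 2 * \<bar>x\<bar> + 1" by (simp add: power2_diff)
        then show ?thesis unfolding e by simp
      qed
      then have "\<bar>x\<bar> * f x \<le> (1 + x\<^sup>2) * f x" using nn by (intro mult_right_mono) auto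
      then show "norm (x * f x) \<le> norm (f x + x\<^sup>2 * f x)" using nn by (simp add: abs_mult algebra_simps)
    qed
  qed
  define g where "g t = indicator {t. Q t} t * f t" for t
  define h where "h t = (t - mu) * g t" for t
  have [measurable]: "{t. Q t} \<in> sets borel" by measurable
  have gi: "integrable lborel g" unfolding g_def
    using integrable_mult_indicator[of "{t. Q t}" lborel f] fi by simp
  have tgi: "integrable lborel (\<lambda>t. t * g t)" unfolding g_def
    using integrable_mult_indicator[of "{t. Q t}" lborel "\<lambda>t. t * f t"] tf by (simp add: algebra_simps)
  have refl: "h (2 * mu - t) = - h t" for t
  proof -
    have "f (2 * mu - t) = f t" using sym[of "mu - t"] by simp
    then show ?thesis unfolding h_def g_def using Qs[of t] by (simp add: indicator_def algebra_simps)
  qed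
  have "integral\<^sup>L lborel h = \<bar>-1\<bar> *\<^sub>R (\<integral>x. h (2 * mu + (-1) * x) \<partial>lborel)"
    by (rule lborel_integral_real_affine) simp
  also have "\<dots> = - integral\<^sup>L lborel h" using refl by simp
  finally have h0: "integral\<^sup>L lborel h = 0" by simp
  have "integral\<^sup>L lborel h = integral\<^sup>L lborel (\<lambda>t. t * g t) - mu * integral\<^sup>L lborel g"
    unfolding h_def using gi tgi by (simp add: algebra_simps)
  then have "integral\<^sup>L lborel (\<lambda>t. t * g t) = mu * integral\<^sup>L lborel g" using h0 by simp
  then show ?thesis unfolding set_lebesgue_integral_def g_def by (simp add: algebra_simps)
qed


lemma plat_part:
  assumes prior: "prior_density p" and A: "mppd n thr \<psi>" and m: "m \<in> {1..n}"
    and C2m: "w m = (LINT \<theta>:{thr (m - 1)<..<thr m}|lborel. \<theta> * p \<theta>)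
                                  / (LINT \<theta>:{thr (m - 1)<..<thr m}|lborel. p \<theta>)"
    and s: "s \<in> {1::nat, 2}"
  shows "plat_loss p \<psi> (eta_star mu1 mu2) m x1 x2 (wqd mu1 mu2 w m x1 x2)
           \<le> plat_loss p \<psi> (eta_star mu1 mu2) m x1 x2 s"
proof -
  define a where "a = thr (m - 1)"
  define b where "b = thr m"
  define I0 where "I0 = {a<..<b}"
  define U where "U = {\<theta>\<in>{0..1}. \<psi> \<theta> = m}"
  have pm[measurable]: "p \<in> borel_measurable lborel" and pnn: "\<And>x. x \<in> {0..1} \<Longrightarrow> 0 \<le> p x"
    and pint: "set_integrable lborel {0..1} p"
    using prior unfolding prior_density_def by auto
  have tm: "\<forall>i<n. thr i < thr (Suc i)" and t0: "thr 0 = 0" and tn: "thr n = 1"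
    using A unfolding mppd_def by auto
  have a0: "0 \<le> a" unfolding a_def using thr_mono[OF tm, of 0 "m - 1"] m t0 by auto
  have b1: "b \<le> 1" unfolding b_def using thr_mono[OF tm, of m n] m tn by auto
  have I0sub: "I0 \<subseteq> {0..1}" using a0 b1 unfolding I0_def by auto
  have I0U: "I0 \<subseteq> U" using A m I0sub unfolding mppd_def U_def I0_def a_def b_def by auto
  have UI0: "U \<subseteq> I0 \<union> {a, b}" using A unfolding mppd_def U_def I0_def a_def b_def by force
  have U_eq: "U = I0 \<union> (U \<inter> {a, b})" using I0U UI0 by auto
  have [measurable]: "I0 \<in> sets lborel" "I0 \<in> sets borel" unfolding I0_def by simp_all
  have fin: "U \<inter> {a, b} \<in> sets lborel"
  proof -
    have "closed (U \<inter> {a, b})" by (intro finite_imp_closed) auto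
    then show ?thesis by simp
  qed
  have "I0 \<union> (U \<inter> {a, b}) \<in> sets lborel" using fin by (intro sets.Un) (simp_all add: I0_def)
  then have [measurable]: "U \<in> sets lborel" by (simp only: U_eq[symmetric])
  then have [measurable]: "U \<in> sets borel" by simp
  have cong: "(LINT \<theta>:U|lborel. g \<theta>) = (LINT \<theta>:I0|lborel. g \<theta>)" if [measurable]: "g \<in> borel_measurable lborel" for g :: "real \<Rightarrow> real"
  proof (rule set_integral_cong_set)
    show "set_borel_measurable lborel I0 g" "set_borel_measurable lborel U g"
      unfolding set_borel_measurable_def by measurable
    have "AE x in lborel. x \<noteq> a" "AE x in lborel. x \<noteq> b" by (rule AE_lborel_singleton)+
    then show "AE x in lborel. (x \<in> I0) = (x \<in> U)"
      by eventually_elim (use I0U UI0 in auto)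
  qed
  define D where "D = (LINT \<theta>:I0|lborel. p \<theta>)"
  define N where "N = (LINT \<theta>:I0|lborel. \<theta> * p \<theta>)"
  have wm: "w m = N / D" using C2m unfolding N_def D_def I0_def a_def b_def .
  have pI: "set_integrable lborel I0 p" by (rule set_integrable_subset[OF pint _ I0sub]) simp
  have tpI: "set_integrable lborel I0 (\<lambda>\<theta>. \<theta> * p \<theta>)"
    unfolding set_integrable_def
  proof (rule Bochner_Integration.integrable_bound[OF pint[unfolded set_integrable_def]])
    show "(\<lambda>x. indicat_real I0 x *\<^sub>R (x * p x)) \<in> borel_measurable lborel" by measurable
    show "AE x in lborel. norm (indicat_real I0 x *\<^sub>R (x * p x)) \<le> norm (indicat_real {0..1} x *\<^sub>R p x)"
    proof (intro AE_I2)
      fix x :: real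
      show "norm (indicat_real I0 x *\<^sub>R (x * p x)) \<le> norm (indicat_real {0..1} x *\<^sub>R p x)"
      proof (cases "x \<in> I0")
        case True
        then have x: "x \<in> {0..1}" using I0sub by auto
        then have "\<bar>x * p x\<bar> \<le> \<bar>p x\<bar>" using pnn[OF x] by (auto simp: abs_mult intro: mult_left_le_one_le)
        then show ?thesis using True x by (simp add: indicator_def)
      qed (simp add: indicator_def)
    qed
  qed
  have Dnn: "0 \<le> D" unfolding D_def set_lebesgue_integral_def
    by (rule Bochner_Integration.integral_nonneg) (use pnn I0sub in \<open>auto simp: indicator_def\<close>)
  define c1 where "c1 = (x1 - mu1)\<^sup>2"
  define c2 where "c2 = (x2 - mu2)\<^sup>2"
  have P1: "plat_loss p \<psi> (eta_star mu1 mu2) m x1 x2 1 = ((D - N) * c2) / D"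
  proof -
    have "(LINT \<theta>:U|lborel. p \<theta> * loss \<theta> x1 x2 (eta_star mu1 mu2 (disclose 1 x1 x2) m))
        = (LINT \<theta>:U|lborel. (p \<theta> - \<theta> * p \<theta>) * c2)"
      by (simp add: loss_def eta_star_def disclose_def c2_def algebra_simps)
    also have "\<dots> = (LINT \<theta>:I0|lborel. (p \<theta> - \<theta> * p \<theta>) * c2)" by (rule cong) measurable
    also have "\<dots> = (D - N) * c2" using pI tpI unfolding D_def N_def by simp
    finally show ?thesis unfolding plat_loss_def U_def[symmetric] using cong[OF pm] D_def by simp
  qed
  have P2: "plat_loss p \<psi> (eta_star mu1 mu2) m x1 x2 2 = (N * c1) / D"
  proof -
    have "(LINT \<theta>:U|lborel. p \<theta> * loss \<theta> x1 x2 (eta_star mu1 mu2 (disclose 2 x1 x2) m))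
        = (LINT \<theta>:U|lborel. (\<theta> * p \<theta>) * c1)"
      by (simp add: loss_def eta_star_def disclose_def c1_def algebra_simps)
    also have "\<dots> = (LINT \<theta>:I0|lborel. (\<theta> * p \<theta>) * c1)" by (rule cong) measurable
    also have "\<dots> = N * c1" unfolding N_def by simp
    finally show ?thesis unfolding plat_loss_def U_def[symmetric] using cong[OF pm] D_def by simp
  qed
  show ?thesis
  proof (cases "D = 0")
    case True
    then show ?thesis using s P1 P2 by (auto simp: wqd_def)
  next
    case False
    then have Dp: "D > 0" using Dnn by simp
    have e1: "((D - N) * c2) / D = (1 - w m) * c2" using Dp wm by (simp add: field_simps)
    have e2: "(N * c1) / D = w m * c1" using Dp wm by (simp add: field_simps)
    show ?thesis using s P1 P2 e1 e2 by (auto simp: wqd_def c1_def c2_def)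
  qed
qed


lemma moment_ints:
  fixes f :: "real \<Rightarrow> real"
  assumes fm[measurable]: "f \<in> borel_measurable lborel" and nn: "\<And>x. 0 \<le> f x"
    and fi: "integrable lborel f" and fv: "integrable lborel (\<lambda>x. x\<^sup>2 * f x)"
  shows "integrable lborel (\<lambda>x. x * f x)" "integrable lborel (\<lambda>x. (x - mu)\<^sup>2 * f x)"
proof -
  show tf: "integrable lborel (\<lambda>x. x * f x)"
  proof (rule Bochner_Integration.integrable_bound[OF Bochner_Integration.integrable_add[OF fi fv]])
    show "(\<lambda>x. x * f x) \<in> borel_measurable lborel" by measurable
    show "AE x in lborel. norm (x * f x) \<le> norm (f x + x\<^sup>2 * f x)"
    proof (intro AE_I2)
      fix x :: real
      have "\<bar>x\<bar> \<le> 1 + x\<^sup>2"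
      proof -
        have e: "x\<^sup>2 = \<bar>x\<bar>\<^sup>2" by simp
        have "0 \<le> (\<bar>x\<bar> - 1)\<^sup>2" by simp
        then have "0 \<le> \<bar>x\<bar>\<^sup>2 - 2 * \<bar>x\<bar> + 1" by (simp add: power2_diff)
        then show ?thesis unfolding e by simp
      qed
      then have "\<bar>x\<bar> * f x \<le> (1 + x\<^sup>2) * f x" using nn by (intro mult_right_mono) auto
      then show "norm (x * f x) \<le> norm (f x + x\<^sup>2 * f x)" using nn by (simp add: abs_mult algebra_simps)
    qed
  qed
  have "(\<lambda>x. (x - mu)\<^sup>2 * f x) = (\<lambda>x. x\<^sup>2 * f x - 2 * mu * (x * f x) + mu\<^sup>2 * f x)"
    by (auto simp: power2_diff algebra_simps)
  then show "integrable lborel (\<lambda>x. (x - mu)\<^sup>2 * f x)"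
    using fi fv tf by simp
qed

theorem theorem1:
  fixes n :: nat and f1 f2 p :: "real \<Rightarrow> real" and mu1 mu2 :: real
    and thr w :: "nat \<Rightarrow> real" and \<psi> :: "real \<Rightarrow> nat"
  assumes n: "n \<ge> 1"
    and X1: "sym_full_density f1 mu1" and X2: "sym_full_density f2 mu2"
    and var1: "integrable lborel (\<lambda>x. x\<^sup>2 * f1 x)"
    and var2: "integrable lborel (\<lambda>x. x\<^sup>2 * f2 x)"
    and prior: "prior_density p"
    and A: "mppd n thr \<psi>"
    and B_range: "\<forall>m\<in>{1..n}. 0 \<le> w m \<and> w m \<le> 1"
    and B_mono: "\<forall>m\<in>{1..<n}. w m < w (Suc m)"
    and C1: "\<forall>m\<in>{1..<n}. Lw f1 f2 mu1 mu2 (w m) (thr m) = Lw f1 f2 mu1 mu2 (w (Suc m)) (thr m)"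
    and C2: "\<forall>m\<in>{1..n}. w m = (LINT \<theta>:{thr (m - 1)<..<thr m}|lborel. \<theta> * p \<theta>)
                                  / (LINT \<theta>:{thr (m - 1)<..<thr m}|lborel. p \<theta>)"
  shows "bne n f1 f2 p \<psi> (wqd mu1 mu2 w) (eta_star mu1 mu2)"
proof -
  have f1m[measurable]: "f1 \<in> borel_measurable lborel" and f1nn: "\<And>x. 0 \<le> f1 x"
    and f1i: "integrable lborel f1" and f1s: "\<And>t. f1 (mu1 + t) = f1 (mu1 - t)"
    using X1 unfolding sym_full_density_def by auto
  have f2m[measurable]: "f2 \<in> borel_measurable lborel" and f2nn: "\<And>x. 0 \<le> f2 x"
    and f2i: "integrable lborel f2" and f2s: "\<And>t. f2 (mu2 + t) = f2 (mu2 - t)"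
    using X2 unfolding sym_full_density_def by auto
  interpret R: recv_setup f1 f2 mu1 mu2
    using f1m f2m f1nn f2nn f1i f2i moment_ints(2)[OF f1m f1nn f1i var1] moment_ints(2)[OF f2m f2nn f2i var2]
    by unfold_locales auto
  have tm: "\<forall>i<n. thr i < thr (Suc i)" using A unfolding mppd_def by auto
  have part1: "\<forall>\<theta>\<in>{0..1}. \<psi> \<theta> \<in> {1..n} \<and>
        (\<forall>m\<in>{1..n}. recv_loss f1 f2 (wqd mu1 mu2 w) (eta_star mu1 mu2) \<theta> (\<psi> \<theta>)
                  \<le> recv_loss f1 f2 (wqd mu1 mu2 w) (eta_star mu1 mu2) \<theta> m)"
  proof (intro ballI conjI)
    fix \<theta> :: real assume th: "\<theta> \<in> {0..1}"
    have j: "\<psi> \<theta> \<in> {1..n}" "thr (\<psi> \<theta> - 1) \<le> \<theta>" "\<theta> \<le> thr (\<psi> \<theta>)"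
      using A th unfolding mppd_def by auto
    then show "\<psi> \<theta> \<in> {1..n}" by simp
    fix m assume m: "m \<in> {1..n}"
    have "\<theta> * R.A (w (\<psi> \<theta>)) + (1 - \<theta>) * R.B (w (\<psi> \<theta>)) \<le> \<theta> * R.A (w m) + (1 - \<theta>) * R.B (w m)"
    proof (rule lines_min[where a="\<lambda>k. R.A (w k)" and b="\<lambda>k. R.B (w k)", OF _ _ tm j m])
      show "\<forall>k\<in>{1..<n}. R.A (w (Suc k)) - R.B (w (Suc k)) \<le> R.A (w k) - R.B (w k)"
      proof
        fix k assume k: "k \<in> {1..<n}"
        then have "w k \<le> w (Suc k)" using B_mono by (auto intro: less_imp_le)
        then show "R.A (w (Suc k)) - R.B (w (Suc k)) \<le> R.A (w k) - R.B (w k)"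
          using R.A_mono R.B_mono by (smt (verit))
      qed
      show "\<forall>k\<in>{1..<n}. thr k * R.A (w k) + (1 - thr k) * R.B (w k) = thr k * R.A (w (Suc k)) + (1 - thr k) * R.B (w (Suc k))"
        using C1 by (simp add: R.Lw_eq)
    qed
    then show "recv_loss f1 f2 (wqd mu1 mu2 w) (eta_star mu1 mu2) \<theta> (\<psi> \<theta>)
                  \<le> recv_loss f1 f2 (wqd mu1 mu2 w) (eta_star mu1 mu2) \<theta> m"
      by (simp add: R.recv_eq R.Lw_eq)
  qed
  have part2: "\<forall>m\<in>{1..n}. \<forall>x1 x2. wqd mu1 mu2 w m x1 x2 \<in> {1, 2} \<and>
        (\<forall>s\<in>{1::nat, 2}. plat_loss p \<psi> (eta_star mu1 mu2) m x1 x2 (wqd mu1 mu2 w m x1 x2)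
           \<le> plat_loss p \<psi> (eta_star mu1 mu2) m x1 x2 s)"
  proof (intro ballI allI conjI)
    fix m x1 x2 s assume m: "m \<in> {1..n}" and s: "s \<in> {1::nat, 2}"
    show "plat_loss p \<psi> (eta_star mu1 mu2) m x1 x2 (wqd mu1 mu2 w m x1 x2)
           \<le> plat_loss p \<psi> (eta_star mu1 mu2) m x1 x2 s"
      using plat_part[OF prior A m _ s] C2 m by blast
  qed (simp add: wqd_def)
  have part3: "bayes_consistent n f1 f2 (wqd mu1 mu2 w) (eta_star mu1 mu2)"
    unfolding bayes_consistent_def
  proof (intro ballI allI conjI impI)
    fix m x1 x2 assume m: "m \<in> {1..n}"
    show "fst (eta_star mu1 mu2 (1, x1) m) = x1" "snd (eta_star mu1 mu2 (2, x2) m) = x2"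
      by (simp_all add: eta_star_def)
    have S1: "{t. wqd mu1 mu2 w m x1 t = 1} = {t. (1 - w m) * (t - mu2)\<^sup>2 < w m * (x1 - mu1)\<^sup>2}"
      by (auto simp: wqd_def)
    have M1: "(LINT t:{t. wqd mu1 mu2 w m x1 t = 1}|lborel. t * f2 t) = mu2 * (LINT t:{t. wqd mu1 mu2 w m x1 t = 1}|lborel. f2 t)"
      unfolding S1
    proof (rule sym_mean[OF f2m f2nn f2i var2 f2s])
      show "Measurable.pred borel (\<lambda>t. (1 - w m) * (t - mu2)\<^sup>2 < w m * (x1 - mu1)\<^sup>2)" by measurable
      fix t :: real
      have "(2 * mu2 - t - mu2)\<^sup>2 = (t - mu2)\<^sup>2" by (simp add: power2_eq_square algebra_simps)
      then show "((1 - w m) * (2 * mu2 - t - mu2)\<^sup>2 < w m * (x1 - mu1)\<^sup>2) = ((1 - w m) * (t - mu2)\<^sup>2 < w m * (x1 - mu1)\<^sup>2)"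
        by simp
    qed
    assume pos: "(LINT t:{t. wqd mu1 mu2 w m x1 t = 1}|lborel. f2 t) > 0"
    then show "snd (eta_star mu1 mu2 (1, x1) m) = (LINT t:{t. wqd mu1 mu2 w m x1 t = 1}|lborel. t * f2 t)
                                / (LINT t:{t. wqd mu1 mu2 w m x1 t = 1}|lborel. f2 t)"
      unfolding M1 by (simp add: eta_star_def)
  next
    fix m x1 x2 assume m: "m \<in> {1..n}"
    have S2: "{t. wqd mu1 mu2 w m t x2 = 2} = {t. w m * (t - mu1)\<^sup>2 \<le> (1 - w m) * (x2 - mu2)\<^sup>2}"
      by (auto simp: wqd_def)
    have M2: "(LINT t:{t. wqd mu1 mu2 w m t x2 = 2}|lborel. t * f1 t) = mu1 * (LINT t:{t. wqd mu1 mu2 w m t x2 = 2}|lborel. f1 t)"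
      unfolding S2
    proof (rule sym_mean[OF f1m f1nn f1i var1 f1s])
      show "Measurable.pred borel (\<lambda>t. w m * (t - mu1)\<^sup>2 \<le> (1 - w m) * (x2 - mu2)\<^sup>2)" by measurable
      fix t :: real
      have "(2 * mu1 - t - mu1)\<^sup>2 = (t - mu1)\<^sup>2" by (simp add: power2_eq_square algebra_simps)
      then show "(w m * (2 * mu1 - t - mu1)\<^sup>2 \<le> (1 - w m) * (x2 - mu2)\<^sup>2) = (w m * (t - mu1)\<^sup>2 \<le> (1 - w m) * (x2 - mu2)\<^sup>2)"
        by simp
    qed
    assume pos: "(LINT t:{t. wqd mu1 mu2 w m t x2 = 2}|lborel. f1 t) > 0"
    then show "fst (eta_star mu1 mu2 (2, x2) m) = (LINT t:{t. wqd mu1 mu2 w m t x2 = 2}|lborel. t * f1 t)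
                                / (LINT t:{t. wqd mu1 mu2 w m t x2 = 2}|lborel. f1 t)"
      unfolding M2 by (simp add: eta_star_def)
  qed
  show ?thesis unfolding bne_def using part1 part2 part3 by blast
qed

end
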